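(* Let $0\leq\nu<\frac12$. Then for all $x>0$, \[ \Big(\frac{x}{x+\frac12-\nu}\Big)^{\nu+\frac12}<\sqrt{\frac{2x}{\pi}}\,\mathrm{e}^{x}K_\nu(x)<1 . \]
   Context: $K_\nu$ denotes the modified Bessel function of the second kind. *)

theory Defs
  imports "HOL-Analysis.Analysis"
begin

text \<open>Modified Bessel function of the second kind, via the standard integral
representation K_nu(x) = integral over t in [0,infinity) of exp(-x cosh t) cosh(nu t),
valid for x > 0 and all real nu.\<close>
definition besselK :: "real \<Rightarrow> real \<Rightarrow> real" where
  "besselK \<nu> x = (LINT t:{0..}|lborel. exp (- x * cosh t) * cosh (\<nu> * t))"

end

theory Submission
  imports Defs "HOL-Probability.Distributions" "HOL-Real_Asymp.Real_Asymp"
begin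


lemma gauss0:
  "set_integrable lborel {0<..} (\<lambda>s::real. exp (- s\<^sup>2))"
  "(LINT s:{0<..}|lborel. exp (- s\<^sup>2)) = sqrt pi / 2"
proof -
  have h: "has_bochner_integral lborel (\<lambda>x. indicator {0..} x *\<^sub>R exp (- x\<^sup>2)) (sqrt pi / 2)"
    by (rule gaussian_moment_0)
  have i0: "set_integrable lborel {0..} (\<lambda>s::real. exp (- s\<^sup>2))"
    using h unfolding set_integrable_def by (simp add: has_bochner_integral_iff)
  have v0: "(LINT s:{0..}|lborel. exp (- s\<^sup>2)) = sqrt pi / 2"
    using h unfolding set_lebesgue_integral_def by (simp add: has_bochner_integral_iff)
  show "set_integrable lborel {0<..} (\<lambda>s::real. exp (- s\<^sup>2))"
    using i0 by (subst set_integrable_discrete_difference[where X="{0}" and B="{0..}"]) auto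
  show "(LINT s:{0<..}|lborel. exp (- s\<^sup>2)) = sqrt pi / 2"
    using v0 by (subst set_integral_discrete_difference[where X="{0}" and B="{0..}"]) auto
qed



lemma I1:
  fixes x :: real assumes x: "x > 0"
  shows "set_integrable lborel {0<..} (\<lambda>t. exp (- x * cosh t) * cosh (t/2))"
    "(LINT t:{0<..}|lborel. exp (- x * cosh t) * cosh (t/2)) = sqrt (pi / (2*x)) * exp (- x)"
proof -
  define c where "c = sqrt (2*x)"
  have c: "c > 0" using x by (simp add: c_def)
  have c2: "c^2 = 2*x" using x by (simp add: c_def)
  define g where "g s = 2 * arsinh (s / c)" for s
  define g' where "g' s = 2 / (c * sqrt ((s/c)\<^sup>2 + 1))" for s
  define f where "f t = exp (- x * cosh t) * cosh (t/2)" for t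
  have fg: "f (g s) * g' s = (2 / c * exp (-x)) * exp (- s\<^sup>2)" for s
  proof -
    have p0: "(s/c)\<^sup>2 + 1 > 0" by (smt (verit) zero_le_power2)
    have p: "sqrt ((s/c)\<^sup>2 + 1) > 0" using p0 by simp
    have ch: "cosh (g s) = 1 + 2 * (s/c)\<^sup>2"
      unfolding g_def cosh_double_cosh cosh_arsinh_real by simp
    have ch2: "cosh (g s / 2) = sqrt ((s/c)\<^sup>2 + 1)"
      unfolding g_def by (simp add: cosh_arsinh_real)
    have e: "- x * (1 + 2 * (s/c)\<^sup>2) = -x + - s\<^sup>2"
      using c2 c x by (simp add: field_simps power2_eq_square)
    show ?thesis unfolding f_def ch ch2 g'_def e exp_add using p c
      by (simp add: field_simps)
  qed
  have deriv: "DERIV g s :> g' s" for s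
  proof -
    have "((\<lambda>s. arsinh (s/c)) has_real_derivative (1/sqrt((s/c)^2+1)) * (1/c)) (at s)"
      using c by (intro DERIV_chain2[OF arsinh_real_has_field_derivative]) (auto intro!: derivative_eq_intros)
    from DERIV_cmult[OF this, of 2] show ?thesis unfolding g_def g'_def using c by (simp add: field_simps)
  qed
  have gint: "set_integrable lborel (einterval 0 \<infinity>) (\<lambda>s. f (g s) * g' s)"
    unfolding fg using gauss0(1) by (simp add: zero_ereal_def)
  have A: "((ereal \<circ> g \<circ> real_of_ereal) \<longlongrightarrow> 0) (at_right 0)"
    unfolding g_def using c by (auto simp: zero_ereal_def ereal_tendsto_simps intro!: tendsto_eq_intros)
  have B: "((ereal \<circ> g \<circ> real_of_ereal) \<longlongrightarrow> \<infinity>) (at_left \<infinity>)"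
  proof -
    have "filterlim (\<lambda>s. (1/c) * s) at_top at_top"
      using c by (intro filterlim_tendsto_pos_mult_at_top[OF tendsto_const _ filterlim_ident]) auto
    then have "filterlim (\<lambda>s. arsinh (s/c)) at_top at_top"
      by (intro filterlim_compose[OF arsinh_real_at_top]) simp
    then have "filterlim (\<lambda>s. 2 * arsinh (s/c)) at_top at_top"
      by (intro filterlim_tendsto_pos_mult_at_top[OF tendsto_const]) auto
    then show ?thesis unfolding g_def ereal_tendsto_simps by (simp add: comp_def)
  qed
  have main: "set_integrable lborel (einterval 0 \<infinity>) f"
       "(LBINT t=0..\<infinity>. f t) = (LBINT s=0..\<infinity>. f (g s) * g' s)"
  proof -
    note L = interval_integral_substitution_nonneg[OF _ deriv _ _ _ _ A B gint]
    have pp: "\<And>s. (s/c)^2 + 1 > 0" by (smt (verit) zero_le_power2)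
    have pp': "\<And>s. (s/c)^2 + 1 \<noteq> 0" using pp by (metis less_irrefl)
    show "set_integrable lborel (einterval 0 \<infinity>) f"
      by (rule L(1)) (use c pp pp' in \<open>auto simp: f_def g'_def zero_ereal_def intro!: continuous_intros\<close>)
    show "(LBINT t=0..\<infinity>. f t) = (LBINT s=0..\<infinity>. f (g s) * g' s)"
      by (rule L(2)) (use c pp pp' in \<open>auto simp: f_def g'_def zero_ereal_def intro!: continuous_intros\<close>)
  qed
  have ei: "einterval 0 \<infinity> = {0::real<..}" by (simp add: zero_ereal_def)
  show "set_integrable lborel {0<..} (\<lambda>t. exp (- x * cosh t) * cosh (t/2))"
    using main(1) unfolding ei f_def .
  have "(LINT t:{0<..}|lborel. exp (- x * cosh t) * cosh (t/2)) = (LBINT t=0..\<infinity>. f t)"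
    unfolding f_def zero_ereal_def interval_integral_to_infinity_eq ..
  also have "\<dots> = (LBINT s=0..\<infinity>. f (g s) * g' s)" by (rule main(2))
  also have "\<dots> = (LINT s:{0<..}|lborel. (2 / c * exp (-x)) * exp (- s\<^sup>2))"
    unfolding fg zero_ereal_def interval_integral_to_infinity_eq ..
  also have "\<dots> = (2 / c * exp (-x)) * (sqrt pi / 2)" by (simp add: gauss0(2))
  also have "\<dots> = sqrt (pi / (2*x)) * exp (- x)"
    unfolding c_def using x by (simp add: real_sqrt_divide)
  finally show "(LINT t:{0<..}|lborel. exp (- x * cosh t) * cosh (t/2)) = sqrt (pi / (2*x)) * exp (- x)" .
qed


lemma sinh_ge_self: fixes s :: real assumes "s \<ge> 0" shows "s \<le> sinh s"
proof -
  have "(\<lambda>u. sinh u - u) 0 \<le> (\<lambda>u. sinh u - u) s"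
  proof (rule DERIV_nonneg_imp_nondecreasing[OF assms])
    fix u :: real
    show "\<exists>y. DERIV (\<lambda>u. sinh u - u) u :> y \<and> y \<ge> 0"
      by (intro exI[of _ "cosh u - 1"] conjI) (use cosh_real_ge_1[of u] in \<open>auto intro!: derivative_eq_intros\<close>)
  qed
  then show ?thesis by simp
qed

lemma psi_nonpos: fixes s :: real assumes "s \<ge> 0"
  shows "s * sinh s / cosh s - 2 * ln (cosh s) \<le> 0"
proof -
  let ?p = "\<lambda>u::real. u * sinh u / cosh u - 2 * ln (cosh u)"
  have "?p s \<le> ?p 0"
  proof (rule DERIV_nonpos_imp_nonincreasing[OF assms])
    fix u :: real assume u: "0 \<le> u"
    have cp: "cosh u > 0" by (simp add: cosh_real_pos)
    have d: "DERIV ?p u :> (u - sinh u * cosh u) / (cosh u)^2"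
    proof -
      have "DERIV ?p u :> ((1 * sinh u + u * cosh u) * cosh u - u * sinh u * sinh u) / (cosh u * cosh u) - 2 * (1 / cosh u * sinh u)"
        using cp by (intro derivative_eq_intros) (auto simp: ac_simps)
      moreover have "((1 * sinh u + u * cosh u) * cosh u - u * sinh u * sinh u) / (cosh u * cosh u) - 2 * (1 / cosh u * sinh u)
          = (u - sinh u * cosh u) / (cosh u)^2"
      proof -
        have e: "u * (cosh u)^2 - u*(sinh u)^2 = u" by (simp add: cosh_square_eq algebra_simps)
        have n: "(1 * sinh u + u * cosh u) * cosh u - u * sinh u * sinh u = u + sinh u * cosh u"
          using e by (simp add: algebra_simps power2_eq_square)
        show ?thesis unfolding n using cp by (simp add: field_simps power2_eq_square)
      qed
      ultimately show ?thesis by simp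
    qed
    have "u \<le> sinh u * cosh u"
    proof -
      have "u \<le> sinh u" by (rule sinh_ge_self[OF u])
      also have "\<dots> \<le> sinh u * cosh u"
        using u by (intro mult_le_cancel_left1[THEN iffD2]) (auto simp: cosh_real_ge_1)
      finally show ?thesis .
    qed
    then show "\<exists>y. DERIV ?p u :> y \<and> y \<le> 0"
      by (intro exI[of _ "(u - sinh u * cosh u) / (cosh u)^2"] conjI d) (simp add: divide_nonpos_pos cp)
  qed
  then show ?thesis by simp
qed

lemma lncosh_ratio: fixes s r :: real assumes "0 < s" "s \<le> r"
  shows "ln (cosh r) / r^2 \<le> ln (cosh s) / s^2"
proof (rule DERIV_nonpos_imp_nonincreasing[OF assms(2)])
  fix u :: real assume u: "s \<le> u" "u \<le> r"
  have up: "u > 0" using u assms by simp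
  have cp: "cosh u > 0" by (simp add: cosh_real_pos)
  have d: "DERIV (\<lambda>u. ln (cosh u) / u^2) u :> (u * sinh u / cosh u - 2 * ln (cosh u)) / u^3"
  proof -
    have "DERIV (\<lambda>u. ln (cosh u) / u^2) u :> (1 / cosh u * sinh u * u^2 - ln (cosh u) * (2 * u)) / (u^2 * u^2)"
      using cp up by (auto intro!: derivative_eq_intros simp: power2_eq_square)
    moreover have "(1 / cosh u * sinh u * u^2 - ln (cosh u) * (2 * u)) / (u^2 * u^2) = (u * sinh u / cosh u - 2 * ln (cosh u)) / u^3"
      using cp up by (simp add: field_simps power2_eq_square power3_eq_cube)
    ultimately show ?thesis by simp
  qed
  show "\<exists>y. DERIV (\<lambda>u. ln (cosh u) / u^2) u :> y \<and> y \<le> 0"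
    using up psi_nonpos[of u] by (intro exI[of _ "(u * sinh u / cosh u - 2 * ln (cosh u)) / u^3"] conjI d) (simp add: divide_nonpos_pos)
qed

lemma cosh_pow_bound: fixes \<nu> t :: real assumes "0 \<le> \<nu>" "\<nu> \<le> 1/2" "t \<ge> 0"
  shows "4 * \<nu>^2 * ln (cosh (t/2)) \<le> ln (cosh (\<nu> * t))"
proof (cases "\<nu> = 0 \<or> t = 0")
  case True then show ?thesis by auto
next
  case False
  then have p: "\<nu> * t > 0" using assms by auto
  have tp: "t > 0" using False assms by auto
  have le: "\<nu> * t \<le> t/2" using mult_right_mono[of \<nu> "1/2" t] assms by simp
  have "ln (cosh (t/2)) / (t/2)^2 \<le> ln (cosh (\<nu>*t)) / (\<nu>*t)^2"
    by (rule lncosh_ratio[OF p le])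
  then have "(\<nu>*t)^2 * (ln (cosh (t/2)) / (t/2)^2) \<le> (\<nu>*t)^2 * (ln (cosh (\<nu>*t)) / (\<nu>*t)^2)"
    by (rule mult_left_mono) simp
  also have "\<dots> = ln (cosh (\<nu>*t))" using p by simp
  also have "(\<nu>*t)^2 * (ln (cosh (t/2)) / (t/2)^2) = 4*\<nu>^2 * ln (cosh (t/2))"
    using tp by (simp add: field_simps power2_eq_square)
  finally show ?thesis by simp
qed



lemma tangent_powr: fixes A A0 b :: real assumes "A > 0" "A0 > 0" "b \<ge> 0"
  shows "A0 powr (-b) - b * A0 powr (-b-1) * (A - A0) \<le> A powr (-b)"
proof -
  have "A powr (-b) = A0 powr (-b) * exp (-b * ln (A/A0))"
  proof -
    have "-b * ln A = -b * ln A0 + -b * ln (A/A0)" using assms by (simp add: ln_div algebra_simps)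
    then have "exp (-b * ln A) = exp (-b * ln A0) * exp (-b * ln (A/A0))" by (simp add: exp_add[symmetric])
    then show ?thesis using assms by (simp add: powr_def)
  qed
  moreover have "exp (-b * ln (A/A0)) \<ge> 1 - b * (A/A0 - 1)"
  proof -
    have "exp (-b * ln (A/A0)) \<ge> 1 + (-b * ln (A/A0))" by (rule exp_ge_add_one_self)
    moreover have "ln (A/A0) \<le> A/A0 - 1" using assms by (intro ln_le_minus_one) simp
    then have "b * ln (A/A0) \<le> b * (A/A0 - 1)" using assms by (intro mult_left_mono)
    ultimately show ?thesis by linarith
  qed
  moreover have "A0 powr (-b) * (1 - b * (A/A0 - 1)) = A0 powr (-b) - b * A0 powr (-b-1) * (A - A0)"
  proof -
    have "A0 powr (-b-1) = A0 powr (-b) / A0" using assms by (simp add: powr_diff)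
    then show ?thesis using assms by (simp add: field_simps)
  qed
  moreover have "A0 powr (-b) > 0" using assms by simp
  ultimately show ?thesis by (metis mult_left_mono less_imp_le)
qed

lemma amgm_ln: fixes \<nu> c :: real assumes "0 \<le> \<nu>" "\<nu> \<le> 1/2" "c > 0"
  shows "(1 - 2*\<nu>) * ln c \<le> ln (2*\<nu> + (1 - 2*\<nu>) * c)"
proof -
  define M where "M = 2*\<nu> + (1 - 2*\<nu>) * c"
  have M: "M > 0"
  proof (cases "\<nu> = 0")
    case True then show ?thesis unfolding M_def using assms by simp
  next
    case False
    have "(1 - 2*\<nu>) * c \<ge> 0" using assms by simp
    then show ?thesis unfolding M_def using assms False by linarith
  qed
  have 1: "ln (1/M) \<le> 1/M - 1" using M by (intro ln_le_minus_one) simp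
  have 2: "ln (c/M) \<le> c/M - 1" using M assms by (intro ln_le_minus_one) simp
  have "2*\<nu> * ln (1/M) + (1 - 2*\<nu>) * ln (c/M) \<le> 2*\<nu> * (1/M - 1) + (1 - 2*\<nu>) * (c/M - 1)"
    using assms 1 2 by (intro add_mono mult_left_mono) auto
  also have "\<dots> = (2*\<nu> + (1 - 2*\<nu>) * c) / M - 1" proof -
    have Mn: "M \<noteq> 0" using M by simp
    show ?thesis using Mn by (simp add: field_simps)
  qed
  also have "\<dots> = 0" using M unfolding M_def by simp
  finally have "2*\<nu> * ln (1/M) + (1 - 2*\<nu>) * ln (c/M) \<le> 0" .
  moreover have "2*\<nu> * ln (1/M) + (1 - 2*\<nu>) * ln (c/M) = (1 - 2*\<nu>) * ln c - ln M"
  proof -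
    have e1: "ln (1/M) = - ln M" using M by (simp add: ln_div)
    have e2: "ln (c/M) = ln c - ln M" using M assms by (simp add: ln_div)
    show ?thesis unfolding e1 e2 by (simp add: algebra_simps)
  qed
  ultimately show ?thesis unfolding M_def by linarith
qed

lemma pw_lower:
  fixes \<nu> t x :: real
  assumes "0 \<le> \<nu>" "\<nu> < 1/2" "t > 0" "x > 0"
  defines "b \<equiv> \<nu> + 1/2" and "A0 \<equiv> 1 + (1/2 - \<nu>)/x"
  shows "cosh (t/2) * (A0 powr (-b) - b * A0 powr (-b-1) * ((2*\<nu> + (1-2*\<nu>) * cosh t) - A0)) < cosh (\<nu> * t)"
proof -
  define A where "A = 2*\<nu> + (1-2*\<nu>) * cosh t"
  have ch1: "cosh t \<ge> 1" by (simp add: cosh_real_ge_1)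
  have A: "A > 0"
  proof -
    have "(1-2*\<nu>) * cosh t \<ge> (1-2*\<nu>) * 1" using assms ch1 by (intro mult_left_mono) auto
    then show ?thesis unfolding A_def using assms(1,2) by (smt (verit))
  qed
  have A0: "A0 > 0" unfolding A0_def using assms by (intro add_pos_nonneg) auto
  have c2: "cosh (t/2) > 1" using cosh_real_nonneg_less_iff[of 0 "t/2"] assms by simp
  have i: "4 * \<nu>^2 * ln (cosh (t/2)) \<le> ln (cosh (\<nu> * t))"
    using assms by (intro cosh_pow_bound) auto
  have ii: "(1 - 2*\<nu>) * ln (cosh t) \<le> ln A"
    unfolding A_def using assms by (intro amgm_ln) (auto simp: cosh_real_pos)
  have iii: "2 * ln (cosh (t/2)) < ln (cosh t)"
  proof -
    have ct: "cosh t = 2 * (cosh (t/2))^2 - 1" using cosh_double_cosh[of "t/2"] by simp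
    have "1 < (cosh (t/2))^2" using one_less_power[OF c2, of 2] by simp
    then have "(cosh (t/2))^2 < cosh t" unfolding ct by linarith
    then have "ln ((cosh (t/2))^2) < ln (cosh t)" using c2 by (intro ln_less_cancel_iff[THEN iffD2]) auto
    then show ?thesis using c2 by (simp add: ln_realpow)
  qed
  have bp: "b * (1 - 2*\<nu>) > 0" unfolding b_def using assms by simp
  have "b * (1 - 2*\<nu>) * (2 * ln (cosh (t/2))) < b * (1 - 2*\<nu>) * ln (cosh t)"
    using iii bp by (intro mult_strict_left_mono)
  also have "\<dots> \<le> b * ln A" using ii assms unfolding b_def by (simp add: mult.assoc mult_left_mono)
  finally have iv: "ln (cosh (t/2)) < ln (cosh (\<nu> * t)) + b * ln A"
    using i unfolding b_def by (simp add: algebra_simps power2_eq_square)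
  have "cosh (t/2) * A powr (-b) < cosh (\<nu> * t)"
  proof -
    have "exp (ln (cosh (t/2)) - b * ln A) = exp (ln (cosh (t/2))) * exp (- b * ln A)"
      by (simp add: exp_diff exp_minus field_simps)
    also have "\<dots> = cosh (t/2) * A powr (-b)" using A c2 by (simp add: powr_def)
    finally have "cosh (t/2) * A powr (-b) = exp (ln (cosh (t/2)) - b * ln A)" by simp
    also have "\<dots> < exp (ln (cosh (\<nu> * t)))" using iv by (simp only: exp_less_cancel_iff)
    also have "\<dots> = cosh (\<nu> * t)" by (simp add: cosh_real_pos)
    finally show ?thesis .
  qed
  moreover have "cosh (t/2) * (A0 powr (-b) - b * A0 powr (-b-1) * (A - A0)) \<le> cosh (t/2) * A powr (-b)"
    using tangent_powr[OF A A0, of b] c2 assms unfolding b_def by (intro mult_left_mono) auto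
  ultimately show ?thesis unfolding A_def by linarith
qed



lemma set_integral_pos_Ioi:
  fixes f :: "real \<Rightarrow> real"
  assumes int: "set_integrable lborel {0<..} f" and pos: "\<And>t. t > 0 \<Longrightarrow> f t > 0"
  shows "(LINT t:{0<..}|lborel. f t) > 0"
proof -
  let ?g = "\<lambda>t. indicator {0<..} t *\<^sub>R f t"
  have ig: "integrable lborel ?g" using int by (simp add: set_integrable_def)
  have nn: "AE t in lborel. 0 \<le> ?g t" using pos by (auto simp: indicator_def less_imp_le)
  have ge: "integral\<^sup>L lborel ?g \<ge> 0" using nn by (intro integral_nonneg_AE)
  have ne: "integral\<^sup>L lborel ?g \<noteq> 0"
  proof
    assume "integral\<^sup>L lborel ?g = 0"
    then have "AE t in lborel. ?g t = 0" using integral_nonneg_eq_0_iff_AE[OF ig nn] by simp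
    moreover have "AE t in lborel. ?g t = 0 \<longrightarrow> t \<notin> {0::real<..}"
    proof (rule AE_I2, rule impI)
      fix t assume "?g t = 0"
      then show "t \<notin> {0::real<..}" using pos[of t] by (auto simp: indicator_def split: if_splits)
    qed
    ultimately have "AE t in lborel. t \<notin> {0::real<..}" by (rule AE_mp)
    then have "emeasure lborel {0::real<..} = 0"
      by (subst (asm) AE_iff_measurable[of "{0<..}"]) auto
    moreover have "emeasure lborel {0<..<1::real} \<le> emeasure lborel {0::real<..}"
      by (intro emeasure_mono) auto
    ultimately show False by simp
  qed
  show ?thesis using ge ne unfolding set_lebesgue_integral_def by simp
qed

lemma set_integral_less_Ioi:
  fixes f g :: "real \<Rightarrow> real"
  assumes "set_integrable lborel {0<..} f" "set_integrable lborel {0<..} g"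
    and "\<And>t. t > 0 \<Longrightarrow> f t < g t"
  shows "(LINT t:{0<..}|lborel. f t) < (LINT t:{0<..}|lborel. g t)"
proof -
  have "(LINT t:{0<..}|lborel. g t - f t) > 0"
    using assms by (intro set_integral_pos_Ioi) auto
  then show ?thesis using assms by (simp add: set_integral_diff)
qed

lemma lim_F: fixes x :: real assumes "x > 0"
  shows "((\<lambda>t. exp (- x * cosh t) * sinh (t/2)) \<longlongrightarrow> 0) at_top"
  using assms by real_asymp



lemma meas_cont:
  fixes g :: "real \<Rightarrow> real" assumes "continuous_on UNIV g"
  shows "set_borel_measurable lborel {0<..} g"
  unfolding set_borel_measurable_def
proof -
  have "(\<lambda>x. indicator {0<..} x *\<^sub>R g x) \<in> borel_measurable borel"
    using assms by (intro borel_measurable_continuous_on_indicator) (auto intro: continuous_on_subset)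
  then show "(\<lambda>x. indicator {0<..} x *\<^sub>R g x) \<in> borel_measurable lborel" by simp
qed

lemma intK:
  fixes x \<nu> :: real assumes x: "x > 0" and nu: "0 \<le> \<nu>" "\<nu> \<le> 1/2"
  shows "set_integrable lborel {0<..} (\<lambda>t. exp (- x * cosh t) * cosh (\<nu> * t))"
proof (rule set_integrable_bound[OF I1(1)[OF x]])
  show "set_borel_measurable lborel {0<..} (\<lambda>t. exp (- x * cosh t) * cosh (\<nu> * t))"
    by (intro meas_cont continuous_intros)
  show "AE t in lborel. t \<in> {0<..} \<longrightarrow> norm (exp (- x * cosh t) * cosh (\<nu> * t)) \<le> norm (exp (- x * cosh t) * cosh (t/2))"
  proof (rule AE_I2, rule impI)
    fix t :: real assume t: "t \<in> {0<..}"
    have "cosh (\<nu> * t) \<le> cosh (t/2)" using t nu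
      by (subst cosh_real_nonneg_le_iff) (auto intro: mult_right_mono[of \<nu> "1/2" t, simplified])
    then show "norm (exp (- x * cosh t) * cosh (\<nu> * t)) \<le> norm (exp (- x * cosh t) * cosh (t/2))"
      by (simp add: abs_mult cosh_real_pos)
  qed
qed

lemma intC:
  fixes x :: real assumes x: "x > 0"
  shows "set_integrable lborel {0<..} (\<lambda>t. exp (- x * cosh t) * cosh (t/2) * cosh t)"
proof (rule set_integrable_bound)
  show "set_integrable lborel {0<..} (\<lambda>t. (2/x) * (exp (- (x/2) * cosh t) * cosh (t/2)))"
    using I1(1)[of "x/2"] x by simp
  show "set_borel_measurable lborel {0<..} (\<lambda>t. exp (- x * cosh t) * cosh (t/2) * cosh t)"
    by (intro meas_cont continuous_intros) auto
  show "AE t in lborel. t \<in> {0<..} \<longrightarrow> norm (exp (- x * cosh t) * cosh (t/2) * cosh t) \<le> norm ((2/x) * (exp (- (x/2) * cosh t) * cosh (t/2)))"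
  proof (rule AE_I2, rule impI)
    fix t :: real
    define c where "c = cosh t"
    have c: "c > 0" unfolding c_def by (simp add: cosh_real_pos)
    have ch: "cosh (t/2) > 0" by (simp add: cosh_real_pos)
    have "x/2 * c \<le> exp (x/2 * c)" using exp_ge_add_one_self[of "x/2*c"] by linarith
    then have "c \<le> (2/x) * exp (x/2 * c)" using x by (simp add: field_simps)
    then have "c * exp (- x * c) \<le> (2/x) * exp (x/2 * c) * exp (- x * c)"
      by (intro mult_right_mono) auto
    also have "\<dots> = (2/x) * exp (- (x/2) * c)" by (simp add: exp_add[symmetric] mult.assoc)
    finally have "c * exp (- x * c) \<le> (2/x) * exp (- (x/2) * c)" .
    then have "exp (- x * c) * cosh (t/2) * c \<le> (2/x) * (exp (- (x/2) * c) * cosh (t/2))"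
      using ch by (smt (verit, ccfv_SIG) mult.commute mult.left_commute mult_right_mono)
    then show "norm (exp (- x * cosh t) * cosh (t/2) * cosh t) \<le> norm ((2/x) * (exp (- (x/2) * cosh t) * cosh (t/2)))"
      using c ch x unfolding c_def by (simp add: abs_mult)
  qed
qed



lemma zero_int:
  fixes x :: real assumes x: "x > 0"
  shows "set_integrable lborel {0<..} (\<lambda>t. exp (- x * cosh t) * cosh (t/2) * (cosh t - 1 - 1/(2*x)))"
    "(LINT t:{0<..}|lborel. exp (- x * cosh t) * cosh (t/2) * (cosh t - 1 - 1/(2*x))) = 0"
proof -
  let ?f = "\<lambda>t. exp (- x * cosh t) * cosh (t/2) * (cosh t - 1 - 1/(2*x))"
  have eq: "?f t = exp (- x * cosh t) * cosh (t/2) * cosh t - (1 + 1/(2*x)) * (exp (- x * cosh t) * cosh (t/2))" for t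
    by (simp add: algebra_simps)
  show int: "set_integrable lborel {0<..} ?f"
    unfolding eq using intC[OF x] I1(1)[OF x] by (intro set_integral_diff(1) set_integrable_mult_right) auto
  define F where "F t = - (exp (- x * cosh t) * sinh (t/2)) / x" for t
  have deriv: "(F has_real_derivative ?f t) (at t)" for t
  proof -
    have "(F has_real_derivative - ((exp (- x * cosh t) * (- x * sinh t)) * sinh (t/2) + exp (- x * cosh t) * (cosh (t/2) / 2)) / x) (at t)"
      unfolding F_def using x by (auto intro!: derivative_eq_intros) (simp_all add: field_simps)
    moreover have "- ((exp (- x * cosh t) * (- x * sinh t)) * sinh (t/2) + exp (- x * cosh t) * (cosh (t/2) / 2)) / x = ?f t"
    proof -
      have st: "sinh t = 2 * sinh (t/2) * cosh (t/2)" using sinh_double[of "t/2"] by simp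
      have ct: "cosh t = 1 + 2 * (sinh (t/2))^2"
        using cosh_double[of "t/2"] cosh_square_eq[of "t/2"] by simp
      have h: "sinh t * sinh (t/2) = (cosh t - 1) * cosh (t/2)"
        unfolding ct by (subst st) (simp add: power2_eq_square algebra_simps)
      have "- ((exp (- x * cosh t) * (- x * sinh t)) * sinh (t/2) + exp (- x * cosh t) * (cosh (t/2) / 2)) / x
          = exp (- x * cosh t) * (sinh t * sinh (t/2)) - exp (- x * cosh t) * cosh (t/2) / (2*x)"
        using x by (simp add: field_simps)
      also have "\<dots> = exp (- x * cosh t) * ((cosh t - 1) * cosh (t/2)) - exp (- x * cosh t) * cosh (t/2) / (2*x)"
        unfolding h ..
      also have "\<dots> = ?f t" using x by (simp add: field_simps)
      finally show ?thesis .
    qed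
    ultimately show ?thesis by simp
  qed
  have A: "((F \<circ> real_of_ereal) \<longlongrightarrow> 0) (at_right 0)"
  proof -
    have "(F \<longlongrightarrow> F 0) (at_right 0)" unfolding F_def
      using x by (intro tendsto_intros) auto
    then show ?thesis by (simp add: F_def zero_ereal_def ereal_tendsto_simps)
  qed
  have B: "((F \<circ> real_of_ereal) \<longlongrightarrow> 0) (at_left \<infinity>)"
  proof -
    have "(F \<longlongrightarrow> - 0 / x) at_top" unfolding F_def
      using x by (intro tendsto_intros lim_F x) simp
    then show ?thesis by (simp add: ereal_tendsto_simps)
  qed
  have "(LBINT t=0..\<infinity>. ?f t) = 0 - 0"
    by (rule interval_integral_FTC_integrable[where F=F])
       (use int deriv A B in \<open>auto simp: zero_ereal_def has_real_derivative_iff_has_vector_derivative[symmetric] intro!: continuous_intros\<close>)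
  then show "(LINT t:{0<..}|lborel. ?f t) = 0"
    by (simp add: zero_ereal_def interval_integral_to_infinity_eq)
qed



theorem corollary2p2:
  fixes \<nu> x :: real
  assumes "0 \<le> \<nu>" and "\<nu> < 1/2" and "x > 0"
  shows "(x / (x + 1/2 - \<nu>)) powr (\<nu> + 1/2) < sqrt (2 * x / pi) * exp x * besselK \<nu> x
       \<and> sqrt (2 * x / pi) * exp x * besselK \<nu> x < 1"
proof -
  note nu = assms(1,2) and x = assms(3)
  define E where "E t = exp (- x * cosh t)" for t
  define I where "I = sqrt (pi / (2*x)) * exp (- x)"
  define b where "b = \<nu> + 1/2"
  define A0 where "A0 = 1 + (1/2 - \<nu>)/x"
  define c0 where "c0 = A0 powr (-b)"
  define c1 where "c1 = b * A0 powr (-b-1)"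
  have A0: "A0 > 0" unfolding A0_def using nu x by (intro add_pos_nonneg) auto
  have K: "besselK \<nu> x = (LINT t:{0<..}|lborel. E t * cosh (\<nu> * t))"
    unfolding besselK_def E_def
    by (rule set_integral_discrete_difference[where X="{0}"]) auto
  have i1: "set_integrable lborel {0<..} (\<lambda>t. E t * cosh (t/2))"
    and v1: "(LINT t:{0<..}|lborel. E t * cosh (t/2)) = I"
    using I1[OF x] unfolding E_def I_def by auto
  have iK: "set_integrable lborel {0<..} (\<lambda>t. E t * cosh (\<nu> * t))"
    using intK[OF x, of \<nu>] nu unfolding E_def by auto
  have iZ: "set_integrable lborel {0<..} (\<lambda>t. E t * cosh (t/2) * (cosh t - 1 - 1/(2*x)))"
    and vZ: "(LINT t:{0<..}|lborel. E t * cosh (t/2) * (cosh t - 1 - 1/(2*x))) = 0"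
    using zero_int[OF x] unfolding E_def by auto
  have Ep: "E t > 0" for t unfolding E_def by simp
  have up: "besselK \<nu> x < I"
    unfolding K v1[symmetric]
  proof (rule set_integral_less_Ioi[OF iK i1])
    fix t :: real assume t: "t > 0"
    have "cosh (\<nu> * t) < cosh (t/2)"
    proof (subst cosh_real_nonneg_less_iff)
      show "\<nu> * t < t/2" using t nu mult_strict_right_mono[of \<nu> "1/2" t] by simp
    qed (use t nu in auto)
    then show "E t * cosh (\<nu> * t) < E t * cosh (t/2)" using Ep[of t] by simp
  qed
  have lo: "c0 * I < besselK \<nu> x"
  proof -
    have "(LINT t:{0<..}|lborel. c0 * (E t * cosh (t/2)) - (c1 * (1 - 2*\<nu>)) * (E t * cosh (t/2) * (cosh t - 1 - 1/(2*x))))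
        < (LINT t:{0<..}|lborel. E t * cosh (\<nu> * t))"
    proof (rule set_integral_less_Ioi)
      show "set_integrable lborel {0<..} (\<lambda>t. c0 * (E t * cosh (t/2)) - (c1 * (1 - 2*\<nu>)) * (E t * cosh (t/2) * (cosh t - 1 - 1/(2*x))))"
        using i1 iZ by (intro set_integral_diff(1) set_integrable_mult_right)
      show "set_integrable lborel {0<..} (\<lambda>t. E t * cosh (\<nu> * t))" by (rule iK)
      fix t :: real assume t: "t > 0"
      have "cosh (t/2) * (c0 - c1 * ((2*\<nu> + (1-2*\<nu>) * cosh t) - A0)) < cosh (\<nu> * t)"
        unfolding c0_def c1_def b_def A0_def using pw_lower[OF nu t x] by simp
      moreover have "(2*\<nu> + (1-2*\<nu>) * cosh t) - A0 = (1 - 2*\<nu>) * (cosh t - 1 - 1/(2*x))"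
        unfolding A0_def using x by (simp add: field_simps)
      ultimately have "cosh (t/2) * (c0 - c1 * ((1 - 2*\<nu>) * (cosh t - 1 - 1/(2*x)))) < cosh (\<nu> * t)" by simp
      then have "E t * (cosh (t/2) * (c0 - c1 * ((1 - 2*\<nu>) * (cosh t - 1 - 1/(2*x))))) < E t * cosh (\<nu> * t)"
        using Ep[of t] by simp
      then show "c0 * (E t * cosh (t/2)) - (c1 * (1 - 2*\<nu>)) * (E t * cosh (t/2) * (cosh t - 1 - 1/(2*x))) < E t * cosh (\<nu> * t)"
        by (simp add: algebra_simps)
    qed
    also have "(LINT t:{0<..}|lborel. c0 * (E t * cosh (t/2)) - (c1 * (1 - 2*\<nu>)) * (E t * cosh (t/2) * (cosh t - 1 - 1/(2*x))))
        = c0 * I"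
      using i1 iZ by (simp add: set_integral_diff(2) v1 vZ)
    finally show ?thesis unfolding K by simp
  qed
  define P where "P = sqrt (2 * x / pi) * exp x"
  have P: "P > 0" unfolding P_def using x by simp
  have PI: "P * I = 1"
  proof -
    have q: "2*x/pi*(pi/(2*x)) = 1" using x by (simp add: field_simps)
    have s1: "sqrt (2*x/pi) * sqrt (pi/(2*x)) = 1"
      unfolding real_sqrt_mult[symmetric] q by simp
    have "P * I = (sqrt (2*x/pi) * sqrt (pi/(2*x))) * (exp x * exp (-x))"
      unfolding P_def I_def by (simp add: algebra_simps)
    also have "\<dots> = 1" unfolding s1 by (simp add: exp_minus)
    finally show ?thesis .
  qed
  have L: "(x / (x + 1/2 - \<nu>)) powr (\<nu> + 1/2) = c0"
  proof -
    have "x / (x + 1/2 - \<nu>) = inverse A0" unfolding A0_def using x nu by (simp add: field_simps)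
    moreover have "A0 powr (- (\<nu> + 1/2)) = inverse (A0 powr (\<nu> + 1/2))" by (rule powr_minus)
    ultimately show ?thesis unfolding c0_def b_def by (simp add: inverse_powr)
  qed
  have "c0 = P * (c0 * I)" using PI by (simp add: algebra_simps)
  also have "\<dots> < P * besselK \<nu> x" using lo P by simp
  finally have 1: "c0 < P * besselK \<nu> x" .
  have "P * besselK \<nu> x < P * I" using up P by simp
  then have 2: "P * besselK \<nu> x < 1" using PI by simp
  show ?thesis using 1 2 L unfolding P_def by simp
qed


end
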